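(* Let $q$ be an indeterminate, $k\ge1$, $n\ge2$, and work in $H_{kn}(q)$ over $\mathbb{C}(q)$. For $i\in\{1,\dots,n-1\}$ let $w_i\in\mathfrak S_{kn}$ be the involution exchanging the blocks $\{(i-1)k+1,\dots,ik\}$ and $\{ik+1,\dots,(i+1)k\}$ preserving order ($w_i(j)=j+k$ for $(i-1)k<j\le ik$, $w_i(j)=j-k$ for $ik<j\le(i+1)k$, $w_i(j)=j$ otherwise), and let $\Sigma_i=P_{k,n}\sigma_{w_i}P_{k,n}\in H^{fus}_{k,n}(q)=P_{k,n}H_{kn}(q)P_{k,n}$. Then $\sigma_{w_i}$ commutes with $P_{k,n}$, and in $H^{fus}_{k,n}(q)$ one has $\Sigma_i\Sigma_{i+1}\Sigma_i=\Sigma_{i+1}\Sigma_i\Sigma_{i+1}$ for $1\le i\le n-2$ and $\Sigma_i\Sigma_j=\Sigma_j\Sigma_i$ for $|i-j|>1$.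
   Context: $H_m(q)$ is the algebra generated by $\sigma_1,\dots,\sigma_{m-1}$ with relations $\sigma_i\sigma_{i+1}\sigma_i=\sigma_{i+1}\sigma_i\sigma_{i+1}$, $\sigma_i\sigma_j=\sigma_j\sigma_i$ for $|i-j|>1$, $\sigma_i^2=1+(q-q^{-1})\sigma_i$. For $w\in\mathfrak S_m$ with reduced expression $s_{a_1}\cdots s_{a_r}$, $\sigma_w=\sigma_{a_1}\cdots\sigma_{a_r}$ and $\ell(w)=r$. The $q$-symmetriser of $H_k(q)$ is $P_k=\frac{q^{-k(k-1)/2}}{[k]_q!}\sum_{w\in\mathfrak S_k}q^{\ell(w)}\sigma_w$, with $[L]_q=\frac{q^L-q^{-L}}{q-q^{-1}}$, $[L]_q!=[1]_q\cdots[L]_q$. $P_{k,n}\in H_{kn}(q)$ is the product over $b=0,\dots,n-1$ of the copies of $P_k$ in the generators $\sigma_{bk+1},\dots,\sigma_{bk+k-1}$. The fused Hecke algebra $H^{fus}_{k,n}(q)=P_{k,n}H_{kn}(q)P_{k,n}$ is an algebra with unit $P_{k,n}$. *)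

theory Defs
  imports Complex_Main "HOL-Computational_Algebra.Polynomial" "HOL-Computational_Algebra.Fraction_Field"
    "HOL-Combinatorics.Permutations"
begin

type_synonym Cq = "complex poly fract"

definition qq :: Cq where "qq = Fract [:0, 1:] 1"

definition qint :: "nat \<Rightarrow> Cq" where
  "qint L = (qq ^ L - inverse qq ^ L) / (qq - inverse qq)"

definition qfact :: "nat \<Rightarrow> Cq" where
  "qfact L = (\<Prod>j = 1..L. qint j)"

definition stransp :: "nat \<Rightarrow> nat \<Rightarrow> nat" where
  "stransp a j = (if j = a then Suc a else if j = Suc a then a else j)"

definition word_perm :: "nat list \<Rightarrow> nat \<Rightarrow> nat" where
  "word_perm as = foldr (\<lambda>a f. stransp a \<circ> f) as id"

definition reduced_word :: "nat \<Rightarrow> (nat \<Rightarrow> nat) \<Rightarrow> nat list \<Rightarrow> bool" where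
  "reduced_word m w as \<longleftrightarrow> set as \<subseteq> {1..<m} \<and> word_perm as = w \<and>
     (\<forall>bs. set bs \<subseteq> {1..<m} \<and> word_perm bs = w \<longrightarrow> length as \<le> length bs)"

definition red_word :: "nat \<Rightarrow> (nat \<Rightarrow> nat) \<Rightarrow> nat list" where
  "red_word m w = (SOME as. reduced_word m w as)"

definition perm_length :: "nat \<Rightarrow> (nat \<Rightarrow> nat) \<Rightarrow> nat" where
  "perm_length m w = length (red_word m w)"

definition sigma_w :: "(nat \<Rightarrow> 'a::ring_1) \<Rightarrow> nat \<Rightarrow> nat \<Rightarrow> (nat \<Rightarrow> nat) \<Rightarrow> 'a" where
  "sigma_w \<sigma> off m w = prod_list (map (\<lambda>a. \<sigma> (off + a)) (red_word m w))"

text \<open>The copy of the q-symmetriser P_k in generators sigma_{bk+1},...,sigma_{bk+k-1};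
  emb is the structure map of the C(q)-algebra.\<close>
definition Psym :: "(Cq \<Rightarrow> 'a::ring_1) \<Rightarrow> (nat \<Rightarrow> 'a) \<Rightarrow> nat \<Rightarrow> nat \<Rightarrow> 'a" where
  "Psym emb \<sigma> k b = emb (qq powi (- int (k * (k - 1) div 2)) / qfact k) *
     (\<Sum>w\<in>{w. w permutes {1..k}}. emb (qq ^ perm_length k w) * sigma_w \<sigma> (b * k) k w)"

definition Pkn :: "(Cq \<Rightarrow> 'a::ring_1) \<Rightarrow> (nat \<Rightarrow> 'a) \<Rightarrow> nat \<Rightarrow> nat \<Rightarrow> 'a" where
  "Pkn emb \<sigma> k n = prod_list (map (Psym emb \<sigma> k) [0..<n])"

definition block_swap :: "nat \<Rightarrow> nat \<Rightarrow> nat \<Rightarrow> nat" where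
  "block_swap k i j = (if (i - 1) * k < j \<and> j \<le> i * k then j + k
     else if i * k < j \<and> j \<le> (i + 1) * k then j - k else j)"

text \<open>sigma : nat => 'a satisfies the defining relations of H_m(q) (indices 1..m-1),
  and emb makes 'a a C(q)-algebra (central unital ring homomorphism).\<close>
definition hecke_rep :: "(Cq \<Rightarrow> 'a::ring_1) \<Rightarrow> nat \<Rightarrow> (nat \<Rightarrow> 'a) \<Rightarrow> bool" where
  "hecke_rep emb m \<sigma> \<longleftrightarrow>
     emb 1 = 1 \<and> (\<forall>x y. emb (x + y) = emb x + emb y) \<and> (\<forall>x y. emb (x * y) = emb x * emb y) \<and>
     (\<forall>x a. emb x * a = a * emb x) \<and>
     (\<forall>i. 1 \<le> i \<and> i + 1 \<le> m - 1 \<longrightarrow> \<sigma> i * \<sigma> (i+1) * \<sigma> i = \<sigma> (i+1) * \<sigma> i * \<sigma> (i+1)) \<and>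
     (\<forall>i j. i \<in> {1..<m} \<and> j \<in> {1..<m} \<and> (i + 1 < j \<or> j + 1 < i) \<longrightarrow> \<sigma> i * \<sigma> j = \<sigma> j * \<sigma> i) \<and>
     (\<forall>i\<in>{1..<m}. \<sigma> i * \<sigma> i = 1 + emb (qq - inverse qq) * \<sigma> i)"

end

theory Submission
  imports Defs
begin


definition invs :: "nat \<Rightarrow> (nat \<Rightarrow> nat) \<Rightarrow> (nat \<times> nat) set" where
  "invs m w = {(i,j). 1 \<le> i \<and> i < j \<and> j \<le> m \<and> w j < w i}"

definition ninv :: "nat \<Rightarrow> (nat \<Rightarrow> nat) \<Rightarrow> nat" where
  "ninv m w = card (invs m w)"

lemma finite_invs: "finite (invs m w)"
proof -
  have "invs m w \<subseteq> {1..m} \<times> {1..m}" by (auto simp: invs_def)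
  then show ?thesis by (rule finite_subset) auto
qed

lemma stransp_invol[simp]: "stransp a (stransp a x) = x"
  by (auto simp: stransp_def)

lemma stransp_comp_self[simp]: "stransp a \<circ> stransp a = id"
  by (auto simp: fun_eq_iff)

lemma inj_stransp: "inj (stransp a)"
  by (metis injI stransp_invol)

lemma stransp_transpose: "stransp a = transpose a (Suc a)"
  by (auto simp: stransp_def transpose_def fun_eq_iff)

lemma stransp_permutes: "a \<in> {1..<m} \<Longrightarrow> stransp a permutes {1..m}"
  unfolding stransp_transpose by (rule permutes_swap_id) auto

lemma ninv_asc:
  assumes a: "1 \<le> a" "Suc a \<le> m" and asc: "w a < w (Suc a)"
  shows "ninv m (w \<circ> stransp a) = Suc (ninv m w)"
proof -
  define \<phi> where "\<phi> = (\<lambda>(i::nat,j::nat). (stransp a i, stransp a j))"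
  have ord: "stransp a i < stransp a j" if "i < j" "(i,j) \<noteq> (a, Suc a)" for i j
    using that by (auto simp: stransp_def)
  have eq: "invs m (w \<circ> stransp a) = insert (a, Suc a) (\<phi> ` invs m w)"
  proof (intro equalityI subsetI)
    fix p assume p: "p \<in> invs m (w \<circ> stransp a)"
    obtain i j where ij: "p = (i,j)" by (cases p)
    show "p \<in> insert (a, Suc a) (\<phi> ` invs m w)"
    proof (cases "p = (a, Suc a)")
      case False
      have "(stransp a i, stransp a j) \<in> invs m w"
        using p ij ord[of i j] False a by (auto simp: invs_def stransp_def split: if_splits)
      moreover have "\<phi> (stransp a i, stransp a j) = p" by (simp add: \<phi>_def ij)
      ultimately show ?thesis by (metis imageI insertI2)
    qed simp
  next
    fix p assume p: "p \<in> insert (a, Suc a) (\<phi> ` invs m w)"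
    show "p \<in> invs m (w \<circ> stransp a)"
    proof (cases "p = (a, Suc a)")
      case True then show ?thesis using a asc by (auto simp: invs_def stransp_def)
    next
      case False
      then obtain i j where ij: "(i,j) \<in> invs m w" "p = \<phi> (i,j)" using p by auto
      have "(i,j) \<noteq> (a, Suc a)" using ij asc by (auto simp: invs_def)
      then show ?thesis using ij ord[of i j] a
        by (auto simp: invs_def \<phi>_def stransp_def split: if_splits)
    qed
  qed
  have inj: "inj_on \<phi> (invs m w)"
    by (auto simp: inj_on_def \<phi>_def dest: injD[OF inj_stransp])
  have notin: "(a, Suc a) \<notin> \<phi> ` invs m w"
  proof
    assume "(a, Suc a) \<in> \<phi> ` invs m w"
    then obtain i j where "(i,j) \<in> invs m w" "stransp a i = a" "stransp a j = Suc a"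
      by (auto simp: \<phi>_def)
    then have "i = Suc a" "j = a" by (metis stransp_invol stransp_def)+
    with \<open>(i,j) \<in> invs m w\<close> show False by (auto simp: invs_def)
  qed
  show ?thesis unfolding ninv_def eq
    using notin inj finite_invs by (simp add: card_image)
qed

lemma ninv_desc:
  assumes a: "1 \<le> a" "Suc a \<le> m" and desc: "w (Suc a) < w a"
  shows "ninv m w = Suc (ninv m (w \<circ> stransp a))"
proof -
  have "ninv m ((w \<circ> stransp a) \<circ> stransp a) = Suc (ninv m (w \<circ> stransp a))"
    by (rule ninv_asc[OF a]) (use desc in \<open>simp add: stransp_def\<close>)
  then show ?thesis by (simp add: comp_assoc)
qed

lemma word_perm_Nil[simp]: "word_perm [] = id" by (simp add: word_perm_def)
lemma word_perm_Cons[simp]: "word_perm (a # as) = stransp a \<circ> word_perm as"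
  by (simp add: word_perm_def)
lemma word_perm_append: "word_perm (as @ bs) = word_perm as \<circ> word_perm bs"
  by (induction as) (auto simp: comp_assoc)

lemma inj_word_perm: "inj (word_perm as)"
proof (induction as)
  case (Cons a as)
  have "inj (stransp a \<circ> word_perm as)" by (rule inj_compose[OF inj_stransp Cons])
  then show ?case by (simp only: word_perm_Cons)
qed simp

lemma ninv_id[simp]: "ninv m id = 0"
proof -
  have "invs m id = {}" by (auto simp: invs_def)
  then show ?thesis by (simp add: ninv_def)
qed

lemma ninv_le_length:
  assumes "set as \<subseteq> {1..<m}"
  shows "ninv m (word_perm as) \<le> length as"
  using assms
proof (induction as rule: rev_induct)
  case (snoc a as)
  let ?w = "word_perm as"
  have wa: "word_perm (as @ [a]) = ?w \<circ> stransp a" by (simp add: word_perm_append)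
  have a: "1 \<le> a" "Suc a \<le> m" using snoc.prems by auto
  have "?w a \<noteq> ?w (Suc a)" using inj_word_perm[of as] by (auto dest: injD)
  then consider "?w a < ?w (Suc a)" | "?w (Suc a) < ?w a" by linarith
  then show ?case
  proof cases
    case 1
    have "ninv m ?w \<le> length as" using snoc by auto
    then show ?thesis unfolding wa length_append_singleton using ninv_asc[OF a 1] by linarith
  next
    case 2
    have "ninv m ?w = Suc (ninv m (?w \<circ> stransp a))" by (rule ninv_desc[OF a 2])
    then have "ninv m (?w \<circ> stransp a) \<le> ninv m ?w" by linarith
    moreover have "ninv m ?w \<le> length as" using snoc by auto
    ultimately show ?thesis unfolding wa length_append_singleton by linarith
  qed
qed simp

lemma word_perm_permutes: "set as \<subseteq> {1..<m} \<Longrightarrow> word_perm as permutes {1..m}"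
proof (induction as)
  case Nil then show ?case by (simp only: word_perm_Nil) (rule permutes_id)
next
  case (Cons a as)
  have s: "stransp a permutes {1..m}" using Cons.prems by (intro stransp_permutes) auto
  have "word_perm as permutes {1..m}" using Cons by auto
  from permutes_compose[OF this s] have "stransp a \<circ> word_perm as permutes {1..m}" .
  then show ?case by (simp only: word_perm_Cons)
qed

lemma exists_desc:
  assumes "i < j" "w j < (w i::nat)"
  shows "\<exists>a. i \<le> a \<and> a < j \<and> w (Suc a) < w a"
proof (rule ccontr)
  assume "\<not> ?thesis"
  then have h: "\<And>a. i \<le> a \<Longrightarrow> a < j \<Longrightarrow> w a \<le> w (Suc a)" by (meson not_le)
  have mono: "\<forall>d. i + d \<le> j \<longrightarrow> w i \<le> w (i + d)"
  proof
    fix d show "i + d \<le> j \<longrightarrow> w i \<le> w (i + d)"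
    proof (induction d)
      case (Suc d)
      then show ?case using h[of "i + d"] by auto
    qed simp
  qed
  have "w i \<le> w (i + (j - i))" using mono[rule_format, of "j - i"] assms by simp
  then have "w i \<le> w j" using assms by simp
  then show False using assms by simp
qed

lemma ninv0_id:
  assumes p: "w permutes {1..m}" and z: "ninv m w = 0"
  shows "w = id"
proof -
  have "invs m w = {}" using z finite_invs by (simp add: ninv_def)
  have le: "w i \<le> w j" if "1 \<le> i" "i < j" "j \<le> m" for i j
  proof -
    have "(i,j) \<notin> invs m w" using \<open>invs m w = {}\<close> by auto
    then show ?thesis using that unfolding invs_def by auto
  qed
  have injw: "inj w" using p permutes_inj by blast
  have lt: "\<And>i j. 1 \<le> i \<Longrightarrow> i < j \<Longrightarrow> j \<le> m \<Longrightarrow> w i < w j"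
    using le injw by (metis injD le_neq_implies_less less_irrefl_nat)
  have inr: "\<And>j. j \<in> {1..m} \<Longrightarrow> w j \<in> {1..m}" using permutes_in_image[OF p] by blast
  have lower: "\<forall>j. 1 \<le> j \<longrightarrow> j \<le> m \<longrightarrow> j \<le> w j"
  proof
    fix j show "1 \<le> j \<longrightarrow> j \<le> m \<longrightarrow> j \<le> w j"
    proof (induction j)
      case (Suc j)
      show ?case
      proof (cases "j = 0")
        case True then show ?thesis using inr[of 1] by auto
      next
        case False then show ?thesis using Suc lt[of j "Suc j"] by auto
      qed
    qed simp
  qed
  have upper: "\<forall>d. d < m \<longrightarrow> w (m - d) \<le> m - d"
  proof
    fix d show "d < m \<longrightarrow> w (m - d) \<le> m - d"
    proof (induction d)
      case 0 then show ?case using inr[of m] by auto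
    next
      case (Suc d)
      show ?case
      proof
        assume h: "Suc d < m"
        then have ih: "w (m - d) \<le> m - d" using Suc.IH by simp
        have "w (m - Suc d) < w (m - d)" by (rule lt) (use h in auto)
        then show "w (m - Suc d) \<le> m - Suc d" using ih h by linarith
      qed
    qed
  qed
  show ?thesis
  proof
    fix j show "w j = id j"
    proof (cases "j \<in> {1..m}")
      case True
      then have "m - j < m" by auto
      then have "w (m - (m - j)) \<le> m - (m - j)" using upper by blast
      then show ?thesis using True lower by auto
    next
      case False then show ?thesis using p by (simp add: permutes_not_in)
    qed
  qed
qed

lemma exists_word:
  assumes "w permutes {1..m}"
  shows "\<exists>x. set x \<subseteq> {1..<m} \<and> word_perm x = w \<and> length x = ninv m w"
  using assms
proof (induction "ninv m w" arbitrary: w)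
  case 0
  then have "w = id" using ninv0_id[OF 0(2) 0(1)[symmetric]] by blast
  then show ?case using 0 by (intro exI[of _ "[]"]) simp
next
  case (Suc l)
  then have "invs m w \<noteq> {}" by (auto simp: ninv_def)
  then obtain i j where ij: "1 \<le> i" "i < j" "j \<le> m" "w j < w i" by (auto simp: invs_def)
  then obtain a where a: "i \<le> a" "a < j" "w (Suc a) < w a" using exists_desc by blast
  have a1: "1 \<le> a" "Suc a \<le> m" using a ij by auto
  have "ninv m w = Suc (ninv m (w \<circ> stransp a))" by (rule ninv_desc[OF a1 a(3)])
  then have l: "l = ninv m (w \<circ> stransp a)" using Suc by simp
  have "w \<circ> stransp a permutes {1..m}"
    by (rule permutes_compose[OF stransp_permutes Suc(3)]) (use a1 in auto)
  from Suc(1)[OF l this] obtain x where x: "set x \<subseteq> {1..<m}" "word_perm x = w \<circ> stransp a" "length x = ninv m (w \<circ> stransp a)"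
    by blast
  have "word_perm (x @ [a]) = w" using x(2) by (simp add: word_perm_append comp_assoc)
  then show ?case using x a1 Suc(2) l
    by (intro exI[of _ "x @ [a]"]) auto
qed

lemma red_word_props:
  assumes "w permutes {1..m}"
  shows "set (red_word m w) \<subseteq> {1..<m} \<and> word_perm (red_word m w) = w
     \<and> length (red_word m w) = ninv m w"
proof -
  obtain x where x: "set x \<subseteq> {1..<m}" "word_perm x = w" "length x = ninv m w"
    using exists_word[OF assms] by blast
  have "length x \<le> length bs" if "set bs \<subseteq> {1..<m}" "word_perm bs = w" for bs
    using ninv_le_length[OF that(1)] that(2) x(3) by simp
  then have "reduced_word m w x" unfolding reduced_word_def
    using x by auto
  then have r: "reduced_word m w (red_word m w)" unfolding red_word_def by (rule someI)
  then have "length (red_word m w) \<le> length x" using x by (auto simp: reduced_word_def)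
  moreover have "ninv m w \<le> length (red_word m w)"
    using r ninv_le_length[of "red_word m w" m] by (auto simp: reduced_word_def)
  ultimately show ?thesis using r x by (auto simp: reduced_word_def)
qed

lemma last_desc:
  assumes "set (u @ [a]) \<subseteq> {1..<m}" "ninv m (word_perm (u @ [a])) = Suc (length u)"
  shows "ninv m (word_perm u) = length u \<and> word_perm (u @ [a]) (Suc a) < word_perm (u @ [a]) a"
proof -
  let ?w = "word_perm u"
  have wa: "word_perm (u @ [a]) = ?w \<circ> stransp a" by (simp add: word_perm_append)
  have a: "1 \<le> a" "Suc a \<le> m" using assms by auto
  have le: "ninv m ?w \<le> length u" using ninv_le_length assms by auto
  have "?w a \<noteq> ?w (Suc a)" using inj_word_perm[of u] by (auto dest: injD)
  then consider "?w a < ?w (Suc a)" | "?w (Suc a) < ?w a" by linarith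
  then show ?thesis
  proof cases
    case 1
    have "ninv m (?w \<circ> stransp a) = Suc (ninv m ?w)" by (rule ninv_asc[OF a 1])
    then show ?thesis using 1 assms(2) unfolding wa by (simp add: stransp_def)
  next
    case 2
    have "ninv m ?w = Suc (ninv m (?w \<circ> stransp a))" by (rule ninv_desc[OF a 2])
    then have "ninv m (?w \<circ> stransp a) \<le> ninv m ?w" by linarith
    then show ?thesis using assms(2) le unfolding wa by linarith
  qed
qed

lemma stransp_comm: "Suc a < b \<Longrightarrow> stransp a \<circ> stransp b = stransp b \<circ> stransp a"
  by (auto simp: fun_eq_iff stransp_def)

lemma stransp_braid:
  "stransp a \<circ> stransp (Suc a) \<circ> stransp a = stransp (Suc a) \<circ> stransp a \<circ> stransp (Suc a)"
  by (auto simp: fun_eq_iff stransp_def)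

lemma mats_step:
  fixes \<sigma> :: "nat \<Rightarrow> 'a::monoid_mult"
  assumes braid: "\<And>a. 1 \<le> a \<Longrightarrow> a + 2 \<le> m \<Longrightarrow> \<sigma> a * \<sigma> (a+1) * \<sigma> a = \<sigma> (a+1) * \<sigma> a * \<sigma> (a+1)"
  and comm: "\<And>a b. a \<in> {1..<m} \<Longrightarrow> b \<in> {1..<m} \<Longrightarrow> a + 1 < b \<Longrightarrow> \<sigma> a * \<sigma> b = \<sigma> b * \<sigma> a"
  and IH: "\<And>u v. length u = l \<Longrightarrow> set u \<subseteq> {1..<m} \<Longrightarrow> set v \<subseteq> {1..<m} \<Longrightarrow>
      word_perm u = word_perm v \<Longrightarrow> length v = l \<Longrightarrow> ninv m (word_perm u) = l \<Longrightarrow>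
      prod_list (map \<sigma> u) = prod_list (map \<sigma> v)"
  and lu: "length u = l" and lv: "length v = l"
  and su: "set (u @ [a]) \<subseteq> {1..<m}" and sv: "set (v @ [b]) \<subseteq> {1..<m}"
  and eqw: "word_perm (u @ [a]) = word_perm (v @ [b])"
  and nw: "ninv m (word_perm (u @ [a])) = Suc l"
  and ab: "a < b"
  shows "prod_list (map \<sigma> (u @ [a])) = prod_list (map \<sigma> (v @ [b]))"
proof -
  define w where "w = word_perm (u @ [a])"
  have du: "ninv m (word_perm u) = l" "w (Suc a) < w a"
    using last_desc[OF su] nw lu unfolding w_def by auto
  have dv: "ninv m (word_perm v) = l" "w (Suc b) < w b"
    using last_desc[OF sv] nw lv eqw unfolding w_def by auto
  have wu: "word_perm u = w \<circ> stransp a" unfolding w_def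
    by (simp add: word_perm_append comp_assoc)
  have wv: "word_perm v = w \<circ> stransp b" unfolding w_def eqw
    by (simp add: word_perm_append comp_assoc)
  have pw: "w permutes {1..m}" unfolding w_def by (rule word_perm_permutes[OF su])
  have a1: "1 \<le> a" "Suc a \<le> m" "1 \<le> b" "Suc b \<le> m" using su sv by auto
  have sperm: "\<And>c. 1 \<le> c \<Longrightarrow> Suc c \<le> m \<Longrightarrow> stransp c permutes {1..m}"
    by (rule stransp_permutes) auto
  show ?thesis
  proof (cases "b = Suc a")
    case True
    define w1 where "w1 = w \<circ> stransp a"
    define w2 where "w2 = w1 \<circ> stransp (Suc a)"
    define w3 where "w3 = w2 \<circ> stransp a"
    have n1: "ninv m w1 = Suc (ninv m w2)" unfolding w2_def
      by (rule ninv_desc) (use a1 True dv du in \<open>auto simp: w1_def stransp_def\<close>)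
    have n2: "ninv m w2 = Suc (ninv m w3)" unfolding w3_def
      by (rule ninv_desc) (use a1 True dv du in \<open>auto simp: w1_def w2_def stransp_def\<close>)
    have p3: "w3 permutes {1..m}" unfolding w3_def w2_def w1_def
      using a1 True by (intro permutes_compose pw sperm) auto
    obtain x where x: "set x \<subseteq> {1..<m}" "word_perm x = w3" "length x = ninv m w3"
      using exists_word[OF p3] by blast
    have lx: "Suc (Suc (length x)) = l" using n1 n2 du wu x unfolding w1_def by simp
    have e1: "word_perm (x @ [a, Suc a]) = w1"
      unfolding word_perm_append x(2) w3_def w2_def by (auto simp: fun_eq_iff stransp_def)
    have e2: "word_perm (x @ [Suc a, a]) = w \<circ> stransp b"
      unfolding word_perm_append x(2) w3_def w2_def w1_def True by (auto simp: fun_eq_iff stransp_def)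
    have "prod_list (map \<sigma> u) = prod_list (map \<sigma> (x @ [a, Suc a]))"
      by (rule IH) (use lu su x a1 True sv e1 wu du lx in \<open>auto simp: w1_def\<close>)
    moreover have "prod_list (map \<sigma> v) = prod_list (map \<sigma> (x @ [Suc a, a]))"
      by (rule IH) (use lv sv x a1 True su e2 wv dv lx in \<open>auto\<close>)
    moreover have "\<sigma> a * \<sigma> (a+1) * \<sigma> a = \<sigma> (a+1) * \<sigma> a * \<sigma> (a+1)"
      using braid a1 True by auto
    ultimately show ?thesis using True by (simp add: mult.assoc)
  next
    case False
    then have ab2: "a + 1 < b" using ab by simp
    define w1 where "w1 = w \<circ> stransp a"
    define w2 where "w2 = w1 \<circ> stransp b"
    have n1: "ninv m w1 = Suc (ninv m w2)" unfolding w2_def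
      by (rule ninv_desc) (use a1 ab2 dv du in \<open>auto simp: w1_def stransp_def\<close>)
    have p2: "w2 permutes {1..m}" unfolding w2_def w1_def
      using a1 by (intro permutes_compose pw sperm) auto
    obtain x where x: "set x \<subseteq> {1..<m}" "word_perm x = w2" "length x = ninv m w2"
      using exists_word[OF p2] by blast
    have lx: "Suc (length x) = l" using n1 du wu x unfolding w1_def by simp
    have e1: "word_perm (x @ [b]) = w1"
      unfolding word_perm_append x(2) w2_def by (auto simp: fun_eq_iff stransp_def)
    have e2: "word_perm (x @ [a]) = w \<circ> stransp b"
      unfolding word_perm_append x(2) w2_def w1_def using ab2 by (auto simp: fun_eq_iff stransp_def)
    have "prod_list (map \<sigma> u) = prod_list (map \<sigma> (x @ [b]))"
      by (rule IH) (use lu su x a1 sv e1 wu du lx in \<open>auto simp: w1_def\<close>)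
    moreover have "prod_list (map \<sigma> v) = prod_list (map \<sigma> (x @ [a]))"
      by (rule IH) (use lv sv x a1 su e2 wv dv lx in \<open>auto\<close>)
    moreover have "\<sigma> a * \<sigma> b = \<sigma> b * \<sigma> a"
      using comm[of a b] a1 ab2 by auto
    ultimately show ?thesis by (simp add: mult.assoc)
  qed
qed



lemma matsumoto:
  fixes \<sigma> :: "nat \<Rightarrow> 'a::monoid_mult"
  assumes braid: "\<And>a. 1 \<le> a \<Longrightarrow> a + 2 \<le> m \<Longrightarrow> \<sigma> a * \<sigma> (a+1) * \<sigma> a = \<sigma> (a+1) * \<sigma> a * \<sigma> (a+1)"
  and comm: "\<And>a b. a \<in> {1..<m} \<Longrightarrow> b \<in> {1..<m} \<Longrightarrow> a + 1 < b \<Longrightarrow> \<sigma> a * \<sigma> b = \<sigma> b * \<sigma> a"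
  shows "length u = l \<Longrightarrow> set u \<subseteq> {1..<m} \<Longrightarrow> set v \<subseteq> {1..<m} \<Longrightarrow>
      word_perm u = word_perm v \<Longrightarrow> length v = l \<Longrightarrow> ninv m (word_perm u) = l \<Longrightarrow>
      prod_list (map \<sigma> u) = prod_list (map \<sigma> v)"
proof (induction l arbitrary: u v)
  case 0
  from 0(1) 0(5) have "u = []" "v = []" by auto
  then show ?case by simp
next
  case (Suc l)
  obtain u' a where u: "u = u' @ [a]" using Suc.prems(1) by (cases u rule: rev_cases) auto
  obtain v' b where v: "v = v' @ [b]" using Suc.prems(5) by (cases v rule: rev_cases) auto
  have lu: "length u' = l" and lv: "length v' = l" using u v Suc.prems by auto
  have IH: "\<And>u v. length u = l \<Longrightarrow> set u \<subseteq> {1..<m} \<Longrightarrow> set v \<subseteq> {1..<m} \<Longrightarrow>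
      word_perm u = word_perm v \<Longrightarrow> length v = l \<Longrightarrow> ninv m (word_perm u) = l \<Longrightarrow>
      prod_list (map \<sigma> u) = prod_list (map \<sigma> v)" by (rule Suc.IH)
  have su: "set (u' @ [a]) \<subseteq> {1..<m}" and sv: "set (v' @ [b]) \<subseteq> {1..<m}"
    using Suc.prems u v by auto
  have eqw: "word_perm (u' @ [a]) = word_perm (v' @ [b])" using Suc.prems u v by simp
  have nw: "ninv m (word_perm (u' @ [a])) = Suc l" using Suc.prems u by simp
  have nw': "ninv m (word_perm (v' @ [b])) = Suc l" using nw eqw by simp
  consider "a = b" | "a < b" | "b < a" by linarith
  then show ?case
  proof cases
    case 1
    have "word_perm u' \<circ> stransp a = word_perm v' \<circ> stransp a"
      using eqw 1 by (simp add: word_perm_append)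
    then have "word_perm u' \<circ> stransp a \<circ> stransp a = word_perm v' \<circ> stransp a \<circ> stransp a"
      by simp
    then have e: "word_perm u' = word_perm v'" by (simp add: comp_assoc)
    have "ninv m (word_perm u') = l" using last_desc[OF su] nw lu by simp
    then have "prod_list (map \<sigma> u') = prod_list (map \<sigma> v')"
      by (intro IH) (use lu lv su sv e in auto)
    then show ?thesis using u v 1 by simp
  next
    case 2
    show ?thesis unfolding u v
      by (rule mats_step[OF braid comm IH lu lv su sv eqw nw 2]) auto
  next
    case 3
    have "prod_list (map \<sigma> (v' @ [b])) = prod_list (map \<sigma> (u' @ [a]))"
      by (rule mats_step[OF braid comm IH lv lu sv su eqw[symmetric] nw' 3]) auto
    then show ?thesis unfolding u v by simp
  qed
qed

lemma ninv_comp: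
  assumes pv: "v permutes {1..m}" and pw: "w permutes {1..m}"
  and cond: "\<And>p q. 1 \<le> p \<Longrightarrow> p < q \<Longrightarrow> q \<le> m \<Longrightarrow> v q < v p \<Longrightarrow> w (v q) < w (v p)"
  shows "ninv m (w \<circ> v) = ninv m w + ninv m v"
proof -
  define D where "D = {(p,q). 1 \<le> p \<and> p < q \<and> q \<le> m \<and> v p < v q \<and> w (v q) < w (v p)}"
  have inr: "\<And>j. j \<in> {1..m} \<longleftrightarrow> v j \<in> {1..m}" using permutes_in_image[OF pv] by blast
  have injv: "inj v" using pv permutes_inj by blast
  have eq: "invs m (w \<circ> v) = invs m v \<union> D"
  proof (intro equalityI subsetI)
    fix x assume x: "x \<in> invs m (w \<circ> v)"
    obtain p q where pq: "x = (p,q)" by (cases x)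
    have "v p \<noteq> v q" using x pq injv by (auto simp: invs_def dest: injD)
    then show "x \<in> invs m v \<union> D" using x pq by (auto simp: invs_def D_def)
  next
    fix x assume x: "x \<in> invs m v \<union> D"
    obtain p q where pq: "x = (p,q)" by (cases x)
    show "x \<in> invs m (w \<circ> v)"
    proof (cases "x \<in> invs m v")
      case True
      then have h: "1 \<le> p" "p < q" "q \<le> m" "v q < v p" using pq by (auto simp: invs_def)
      have "w (v q) < w (v p)" by (rule cond[OF h])
      then show ?thesis using h pq by (simp add: invs_def)
    next
      case False
      then have "x \<in> D" using x by blast
      then show ?thesis using pq by (simp add: invs_def D_def)
    qed
  qed
  have disj: "invs m v \<inter> D = {}" by (auto simp: invs_def D_def)
  have finD: "finite D"
  proof -
    have "D \<subseteq> {1..m} \<times> {1..m}" by (auto simp: D_def)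
    then show ?thesis by (rule finite_subset) auto
  qed
  have bij: "bij_betw (\<lambda>(p,q). (v p, v q)) D (invs m w)"
  proof (rule bij_betw_imageI)
    show "inj_on (\<lambda>(p,q). (v p, v q)) D"
      by (auto simp: inj_on_def dest: injD[OF injv])
    show "(\<lambda>(p,q). (v p, v q)) ` D = invs m w"
    proof (intro equalityI subsetI)
      fix y assume "y \<in> (\<lambda>(p,q). (v p, v q)) ` D"
      then obtain p q where pq: "(p,q) \<in> D" "y = (v p, v q)" by auto
      have "v p \<in> {1..m}" "v q \<in> {1..m}" using pq inr[of p] inr[of q] by (auto simp: D_def)
      then show "y \<in> invs m w" using pq by (auto simp: invs_def D_def)
    next
      fix y assume y: "y \<in> invs m w"
      obtain x1 x2 where xy: "y = (x1, x2)" by (cases y)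
      have sv: "surj v" using pv permutes_surj by blast
      obtain p where p: "v p = x1" using sv by (metis surjD)
      obtain q where q: "v q = x2" using sv by (metis surjD)
      have x12: "x1 \<in> {1..m}" "x2 \<in> {1..m}" "x1 < x2" "w x2 < w x1" using y xy by (auto simp: invs_def)
      then have pm: "p \<in> {1..m}" "q \<in> {1..m}" using inr[of p] inr[of q] p q by auto
      have "p \<noteq> q" using p q x12 by auto
      moreover have "\<not> q < p"
      proof
        assume "q < p"
        then have "w (v p) < w (v q)" using cond[of q p] pm p q x12 by auto
        then show False using p q x12 by auto
      qed
      ultimately have "p < q" by linarith
      then have "(p,q) \<in> D" using pm p q x12 by (auto simp: D_def)
      moreover have "y = (\<lambda>(p,q). (v p, v q)) (p,q)" using xy p q by simp
      ultimately show "y \<in> (\<lambda>(p,q). (v p, v q)) ` D" by (rule rev_image_eqI)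
    qed
  qed
  have "card D = card (invs m w)" using bij by (rule bij_betw_same_card)
  then show ?thesis unfolding ninv_def eq
    using card_Un_disjoint[OF finite_invs finD disj] by simp
qed

definition hrel :: "nat \<Rightarrow> (nat \<Rightarrow> 'a::monoid_mult) \<Rightarrow> bool" where
  "hrel m \<sigma> \<longleftrightarrow> (\<forall>a. 1 \<le> a \<longrightarrow> a + 2 \<le> m \<longrightarrow> \<sigma> a * \<sigma> (a+1) * \<sigma> a = \<sigma> (a+1) * \<sigma> a * \<sigma> (a+1))
    \<and> (\<forall>a b. a \<in> {1..<m} \<longrightarrow> b \<in> {1..<m} \<longrightarrow> a + 1 < b \<longrightarrow> \<sigma> a * \<sigma> b = \<sigma> b * \<sigma> a)"

lemma matsumoto_h:
  assumes "hrel m \<sigma>" "length u = length v" "set u \<subseteq> {1..<m}" "set v \<subseteq> {1..<m}"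
    "word_perm u = word_perm v" "ninv m (word_perm u) = length u"
  shows "prod_list (map \<sigma> u) = prod_list (map \<sigma> v)"
  by (rule matsumoto[of m \<sigma> u "length u" v]) (use assms in \<open>auto simp: hrel_def\<close>)

lemma sigma_w0: "sigma_w \<sigma> 0 m w = prod_list (map \<sigma> (red_word m w))"
  by (simp add: sigma_w_def)

lemma sigma_w_word:
  assumes h: "hrel m \<sigma>" and p: "w permutes {1..m}" and x: "set x \<subseteq> {1..<m}" "word_perm x = w"
    "length x = ninv m w"
  shows "sigma_w \<sigma> 0 m w = prod_list (map \<sigma> x)"
  unfolding sigma_w0
  by (rule matsumoto_h[OF h]) (use red_word_props[OF p] x in auto)

lemma sigma_w_conj:
  assumes h: "hrel m \<sigma>" and p: "w permutes {1..m}" and a: "a \<in> {1..<m}" and b: "b \<in> {1..<m}"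
  and c: "w \<circ> stransp a = stransp b \<circ> w" and asc: "w a < w (Suc a)"
  shows "sigma_w \<sigma> 0 m w * \<sigma> a = \<sigma> b * sigma_w \<sigma> 0 m w"
proof -
  let ?r = "red_word m w"
  have r: "set ?r \<subseteq> {1..<m}" "word_perm ?r = w" "length ?r = ninv m w"
    using red_word_props[OF p] by auto
  have n: "ninv m (w \<circ> stransp a) = Suc (ninv m w)"
    by (rule ninv_asc[OF _ _ asc]) (use a in auto)
  have "prod_list (map \<sigma> (?r @ [a])) = prod_list (map \<sigma> (b # ?r))"
    by (rule matsumoto_h[OF h]) (use r a b n c in \<open>auto simp: word_perm_append\<close>)
  then show ?thesis unfolding sigma_w0 by simp
qed

lemma sigma_w_mult:
  assumes h: "hrel m \<sigma>" and pv: "v permutes {1..m}" and pw: "w permutes {1..m}"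
  and n: "ninv m (w \<circ> v) = ninv m w + ninv m v"
  shows "sigma_w \<sigma> 0 m (w \<circ> v) = sigma_w \<sigma> 0 m w * sigma_w \<sigma> 0 m v"
proof -
  have rv: "set (red_word m v) \<subseteq> {1..<m}" "word_perm (red_word m v) = v" "length (red_word m v) = ninv m v"
    using red_word_props[OF pv] by auto
  have rw: "set (red_word m w) \<subseteq> {1..<m}" "word_perm (red_word m w) = w" "length (red_word m w) = ninv m w"
    using red_word_props[OF pw] by auto
  have "sigma_w \<sigma> 0 m (w \<circ> v) = prod_list (map \<sigma> (red_word m w @ red_word m v))"
    by (rule sigma_w_word[OF h permutes_compose[OF pv pw]]) (use rv rw n in \<open>auto simp: word_perm_append\<close>)
  then show ?thesis unfolding sigma_w0 by simp
qed



definition bsw :: "nat \<Rightarrow> nat \<Rightarrow> nat \<Rightarrow> nat" where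
  "bsw A k j = (if A < j \<and> j \<le> A + k then j + k else if A + k < j \<and> j \<le> A + 2*k then j - k else j)"

lemma block_swap_bsw: "1 \<le> i \<Longrightarrow> block_swap k i = bsw ((i-1)*k) k"
proof -
  assume "1 \<le> i"
  then obtain i' where i: "i = Suc i'" by (cases i) auto
  show ?thesis unfolding i by (auto simp: fun_eq_iff block_swap_def bsw_def algebra_simps)
qed

lemma bsw_invol: "bsw A k (bsw A k j) = j"
  by (auto simp: bsw_def)

lemma bsw_permutes: "A + 2*k \<le> m \<Longrightarrow> bsw A k permutes {1..m}"
  unfolding permutes_def
proof (intro conjI allI impI)
  fix x assume "A + 2*k \<le> m" "x \<notin> {1..m}"
  then show "bsw A k x = x" by (auto simp: bsw_def)
next
  fix y show "\<exists>!x. bsw A k x = y"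
    by (metis bsw_invol)
qed

lemma bsw_conj1: "A < a \<Longrightarrow> a < A + k \<Longrightarrow>
  bsw A k \<circ> stransp a = stransp (a + k) \<circ> bsw A k \<and> bsw A k a < bsw A k (Suc a)"
  by (auto simp: fun_eq_iff bsw_def stransp_def)

lemma bsw_conj2: "A + k < a \<Longrightarrow> a < A + 2*k \<Longrightarrow>
  bsw A k \<circ> stransp a = stransp (a - k) \<circ> bsw A k \<and> bsw A k a < bsw A k (Suc a)"
  by (auto simp: fun_eq_iff bsw_def stransp_def)

lemma bsw_conj3: "Suc a \<le> A \<or> A + 2*k < a \<Longrightarrow>
  bsw A k \<circ> stransp a = stransp a \<circ> bsw A k \<and> bsw A k a < bsw A k (Suc a)"
  by (auto simp: fun_eq_iff bsw_def stransp_def)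

definition cyc1 :: "nat \<Rightarrow> nat \<Rightarrow> nat \<Rightarrow> nat" where
  "cyc1 A k x = (if A < x \<and> x \<le> A + k then x + 2*k else if A + k < x \<and> x \<le> A + 3*k then x - k else x)"
definition cyc2 :: "nat \<Rightarrow> nat \<Rightarrow> nat \<Rightarrow> nat" where
  "cyc2 A k x = (if A < x \<and> x \<le> A + 2*k then x + k else if A + 2*k < x \<and> x \<le> A + 3*k then x - 2*k else x)"
definition rev3 :: "nat \<Rightarrow> nat \<Rightarrow> nat \<Rightarrow> nat" where
  "rev3 A k x = (if A < x \<and> x \<le> A + k then x + 2*k else if A + 2*k < x \<and> x \<le> A + 3*k then x - 2*k else x)"

lemma cyc1_eq: "bsw (A+k) k (bsw A k x) = cyc1 A k x"
  by (auto simp: bsw_def cyc1_def)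
lemma cyc2_eq: "bsw A k (bsw (A+k) k x) = cyc2 A k x"
  by (auto simp: bsw_def cyc2_def)
lemma rev3_eq1: "bsw A k (cyc1 A k x) = rev3 A k x"
  by (auto simp: bsw_def cyc1_def rev3_def)
lemma rev3_eq2: "bsw (A+k) k (cyc2 A k x) = rev3 A k x"
  by (auto simp: bsw_def cyc2_def rev3_def)

lemma add_a: "p < q \<Longrightarrow> bsw A k q < bsw A k p \<Longrightarrow> cyc1 A k q < cyc1 A k p"
  by (auto simp: bsw_def cyc1_def split: if_splits)
lemma add_b: "p < q \<Longrightarrow> cyc1 A k q < cyc1 A k p \<Longrightarrow> rev3 A k q < rev3 A k p"
  by (auto simp: rev3_def cyc1_def split: if_splits)
lemma add_c: "p < q \<Longrightarrow> bsw (A+k) k q < bsw (A+k) k p \<Longrightarrow> cyc2 A k q < cyc2 A k p"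
  by (auto simp: bsw_def cyc2_def split: if_splits)
lemma add_d: "p < q \<Longrightarrow> cyc2 A k q < cyc2 A k p \<Longrightarrow> rev3 A k q < rev3 A k p"
  by (auto simp: rev3_def cyc2_def split: if_splits)

lemma bsw_comm_pt: "A + 2*k \<le> C \<Longrightarrow> bsw A k (bsw C k x) = bsw C k (bsw A k x)"
  by (auto simp: bsw_def)
lemma add_comm: "A + 2*k \<le> C \<Longrightarrow> p < q \<Longrightarrow> bsw C k q < bsw C k p \<Longrightarrow> bsw A k (bsw C k q) < bsw A k (bsw C k p)"
  by (auto simp: bsw_def split: if_splits)


lemma hecke_hrel:
  assumes h: "hecke_rep emb m \<sigma>"
  shows "hrel m \<sigma>"
proof -
  have b: "\<forall>i. 1 \<le> i \<and> i + 1 \<le> m - 1 \<longrightarrow> \<sigma> i * \<sigma> (i+1) * \<sigma> i = \<sigma> (i+1) * \<sigma> i * \<sigma> (i+1)"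
    using h unfolding hecke_rep_def by blast
  have c: "\<forall>i j. i \<in> {1..<m} \<and> j \<in> {1..<m} \<and> (i + 1 < j \<or> j + 1 < i) \<longrightarrow> \<sigma> i * \<sigma> j = \<sigma> j * \<sigma> i"
    using h unfolding hecke_rep_def by blast
  show ?thesis unfolding hrel_def
  proof (intro conjI allI impI)
    fix a assume "1 \<le> a" "a + 2 \<le> m"
    then show "\<sigma> a * \<sigma> (a+1) * \<sigma> a = \<sigma> (a+1) * \<sigma> a * \<sigma> (a+1)" using b[rule_format, of a] by auto
  next
    fix a b assume "a \<in> {1..<m}" "b \<in> {1..<m}" "a + 1 < b"
    then show "\<sigma> a * \<sigma> b = \<sigma> b * \<sigma> a" using c[rule_format, of a b] by auto
  qed
qed

lemma hecke_central: "hecke_rep emb m \<sigma> \<Longrightarrow> emb x * z = z * emb x"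
  unfolding hecke_rep_def by blast

lemma prod_conj:
  fixes z :: "'a::monoid_mult"
  shows "(\<And>a. a \<in> set xs \<Longrightarrow> z * f a = g a * z) \<Longrightarrow> z * prod_list (map f xs) = prod_list (map g xs) * z"
proof (induction xs)
  case (Cons a xs)
  have "z * prod_list (map f (a#xs)) = (z * f a) * prod_list (map f xs)" by (simp add: mult.assoc)
  also have "\<dots> = g a * (z * prod_list (map f xs))" using Cons.prems by (simp add: mult.assoc)
  also have "\<dots> = g a * (prod_list (map g xs) * z)" using Cons by simp
  also have "\<dots> = prod_list (map g (a#xs)) * z" by (simp add: mult.assoc)
  finally show ?case .
qed simp

lemma sum_conj:
  fixes z :: "'a::ring_1"
  assumes XY: "\<And>u. u \<in> U \<Longrightarrow> z * X u = Y u * z" and cen: "\<And>x. emb x * z = z * emb x"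
  shows "z * (emb c * (\<Sum>u\<in>U. emb (d u) * X u)) = (emb c * (\<Sum>u\<in>U. emb (d u) * Y u)) * z"
proof -
  have s: "z * (\<Sum>u\<in>U. emb (d u) * X u) = (\<Sum>u\<in>U. emb (d u) * Y u) * z"
  proof -
    have "z * (\<Sum>u\<in>U. emb (d u) * X u) = (\<Sum>u\<in>U. z * (emb (d u) * X u))" by (simp add: sum_distrib_left)
    also have "\<dots> = (\<Sum>u\<in>U. (emb (d u) * Y u) * z)"
    proof (rule sum.cong[OF refl])
      fix u assume u: "u \<in> U"
      have "z * (emb (d u) * X u) = (z * emb (d u)) * X u" by (simp add: mult.assoc)
      also have "\<dots> = emb (d u) * (z * X u)" using cen[of "d u"] by (metis mult.assoc)
      also have "\<dots> = (emb (d u) * Y u) * z" using XY[OF u] by (simp add: mult.assoc)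
      finally show "z * (emb (d u) * X u) = (emb (d u) * Y u) * z" .
    qed
    also have "\<dots> = (\<Sum>u\<in>U. emb (d u) * Y u) * z" by (simp add: sum_distrib_right)
    finally show ?thesis .
  qed
  have "z * (emb c * (\<Sum>u\<in>U. emb (d u) * X u)) = (z * emb c) * (\<Sum>u\<in>U. emb (d u) * X u)"
    by (simp add: mult.assoc)
  also have "\<dots> = emb c * (z * (\<Sum>u\<in>U. emb (d u) * X u))" using cen[of c] by (metis mult.assoc)
  also have "\<dots> = (emb c * (\<Sum>u\<in>U. emb (d u) * Y u)) * z" unfolding s by (simp add: mult.assoc)
  finally show ?thesis .
qed

lemma psym_conj:
  fixes z :: "'a::ring_1"
  assumes cen: "\<And>x. emb x * z = z * emb x"
  and h: "\<And>a. a \<in> {1..<k} \<Longrightarrow> z * \<sigma> (b*k + a) = \<sigma> (b'*k + a) * z"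
  shows "z * Psym emb \<sigma> k b = Psym emb \<sigma> k b' * z"
  unfolding Psym_def
proof (rule sum_conj[OF _ cen])
  fix u assume "u \<in> {w. w permutes {1..k}}"
  then have "set (red_word k u) \<subseteq> {1..<k}" using red_word_props[of u k] by auto
  then show "z * sigma_w \<sigma> (b * k) k u = sigma_w \<sigma> (b' * k) k u * z"
    unfolding sigma_w_def by (intro prod_conj) (use h in auto)
qed

lemma fuse_braid:
  fixes P x y :: "'a::monoid_mult"
  assumes px: "x*P = P*x" and py: "y*P = P*y" and br: "x*y*x = y*x*y"
  shows "(P*x*P)*(P*y*P)*(P*x*P) = (P*y*P)*(P*x*P)*(P*y*P)"
proof -
  define Q where "Q = P*P"
  have ex: "P*x*P = x*Q" using px unfolding Q_def by (metis mult.assoc)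
  have ey: "P*y*P = y*Q" using py unfolding Q_def by (metis mult.assoc)
  have qx: "Q*x = x*Q" using px unfolding Q_def by (metis mult.assoc)
  have qy: "Q*y = y*Q" using py unfolding Q_def by (metis mult.assoc)
  have qx': "Q*(x*z) = x*(Q*z)" for z using qx by (metis mult.assoc)
  have qy': "Q*(y*z) = y*(Q*z)" for z using qy by (metis mult.assoc)
  have l: "(x*Q)*(y*Q)*(x*Q) = (x*y*x)*(Q*(Q*Q))" by (simp add: mult.assoc qx qy qx' qy')
  have r: "(y*Q)*(x*Q)*(y*Q) = (y*x*y)*(Q*(Q*Q))" by (simp add: mult.assoc qx qy qx' qy')
  show ?thesis unfolding ex ey l r br ..
qed

lemma fuse_comm:
  fixes P x y :: "'a::monoid_mult"
  assumes px: "x*P = P*x" and py: "y*P = P*y" and c: "x*y = y*x"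
  shows "(P*x*P)*(P*y*P) = (P*y*P)*(P*x*P)"
proof -
  define Q where "Q = P*P"
  have ex: "P*x*P = x*Q" using px unfolding Q_def by (metis mult.assoc)
  have ey: "P*y*P = y*Q" using py unfolding Q_def by (metis mult.assoc)
  have qx: "Q*x = x*Q" using px unfolding Q_def by (metis mult.assoc)
  have qy: "Q*y = y*Q" using py unfolding Q_def by (metis mult.assoc)
  have l: "(x*Q)*(y*Q) = (x*y)*(Q*Q)" by (metis mult.assoc qy)
  have r: "(y*Q)*(x*Q) = (y*x)*(Q*Q)" by (metis mult.assoc qx)
  show ?thesis unfolding ex ey l r c ..
qed

lemma Sw_P_comm:
  fixes emb :: "Cq \<Rightarrow> 'a::ring_1"
  assumes h: "hecke_rep emb (k*n) \<sigma>" and k: "1 \<le> k" and i: "1 \<le> i" "i < n"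
  shows "sigma_w \<sigma> 0 (k*n) (block_swap k i) * Pkn emb \<sigma> k n
       = Pkn emb \<sigma> k n * sigma_w \<sigma> 0 (k*n) (block_swap k i)"
proof -
  define m where "m = k*n"
  obtain i' where i': "i = Suc i'" using i by (cases i) auto
  define A where "A = i'*k"
  have ik: "i*k = A + k" "(i-1)*k = A" unfolding A_def i' by auto
  have "(i+1)*k \<le> n*k" using i by (intro mult_le_mono1) simp
  then have Am: "A + 2*k \<le> m" unfolding m_def A_def i' by (simp add: algebra_simps)
  have bs: "block_swap k i = bsw A k" using block_swap_bsw[OF i(1)] ik by simp
  define z where "z = sigma_w \<sigma> 0 m (bsw A k)"
  have hr: "hrel m \<sigma>" using hecke_hrel h m_def by blast
  have pw: "bsw A k permutes {1..m}" by (rule bsw_permutes[OF Am])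
  have cen: "\<And>x y. emb x * y = y * emb x" using hecke_central[OF h] by blast
  have comm: "\<And>a b. a \<in> {1..<m} \<Longrightarrow> b \<in> {1..<m} \<Longrightarrow> a + 1 < b \<Longrightarrow> \<sigma> a * \<sigma> b = \<sigma> b * \<sigma> a"
    using hr unfolding hrel_def by blast
  have gconj: "\<And>a b. a \<in> {1..<m} \<Longrightarrow> b \<in> {1..<m} \<Longrightarrow> bsw A k \<circ> stransp a = stransp b \<circ> bsw A k
      \<Longrightarrow> bsw A k a < bsw A k (Suc a) \<Longrightarrow> z * \<sigma> a = \<sigma> b * z"
    unfolding z_def by (rule sigma_w_conj[OF hr pw])
  have c1: "z * \<sigma> ((i-1)*k + a) = \<sigma> (i*k + a) * z" if a: "a \<in> {1..<k}" for a
  proof -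
    have "z * \<sigma> (A + a) = \<sigma> (A + a + k) * z"
      by (rule gconj) (use a Am bsw_conj1[of A "A+a" k] in auto)
    then show ?thesis unfolding ik by (simp add: add.commute add.left_commute)
  qed
  have c2: "z * \<sigma> (i*k + a) = \<sigma> ((i-1)*k + a) * z" if a: "a \<in> {1..<k}" for a
  proof -
    have "z * \<sigma> (A + k + a) = \<sigma> (A + k + a - k) * z"
      by (rule gconj) (use a Am bsw_conj2[of A k "A+k+a"] in auto)
    then show ?thesis unfolding ik by (simp add: add.commute add.left_commute)
  qed
  have c3: "z * \<sigma> (b*k + a) = \<sigma> (b*k + a) * z"
    if b: "b < n" "b \<noteq> i-1" "b \<noteq> i" and a: "a \<in> {1..<k}" for a b
  proof -
    have "(b+1)*k \<le> n*k" using b by (intro mult_le_mono1) simp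
    then have bm: "b*k + a < m" using a unfolding m_def by (simp add: algebra_simps)
    have side: "Suc (b*k + a) \<le> A \<or> A + 2*k < b*k + a"
    proof (cases "b < i - 1")
      case True
      then have "(b+1)*k \<le> i'*k" using i' by (intro mult_le_mono1) simp
      then show ?thesis using a unfolding A_def by (simp add: algebra_simps)
    next
      case False
      then have "i + 1 \<le> b" using b by simp
      then have "(i+1)*k \<le> b*k" by (intro mult_le_mono1)
      then show ?thesis using a unfolding A_def i' by (simp add: algebra_simps)
    qed
    show ?thesis
      by (rule gconj) (use a bm bsw_conj3[OF side] in auto)
  qed
  have cenz: "\<And>x. emb x * z = z * emb x" using cen by blast
  have p1: "z * Psym emb \<sigma> k (i-1) = Psym emb \<sigma> k i * z"
    by (rule psym_conj[OF cenz c1])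
  have p2: "z * Psym emb \<sigma> k i = Psym emb \<sigma> k (i-1) * z"
    by (rule psym_conj[OF cenz c2])
  have p3: "z * Psym emb \<sigma> k b = Psym emb \<sigma> k b * z" if "b < n" "b \<noteq> i-1" "b \<noteq> i" for b
    by (rule psym_conj[OF cenz]) (rule c3[OF that])
  have e: "\<sigma> (i*k + a) * Psym emb \<sigma> k (i-1) = Psym emb \<sigma> k (i-1) * \<sigma> (i*k + a)"
    if a: "a \<in> {1..<k}" for a
  proof (rule psym_conj)
    show "\<And>x. emb x * \<sigma> (i*k + a) = \<sigma> (i*k + a) * emb x" using cen by blast
    fix a' assume a': "a' \<in> {1..<k}"
    have "(i+1)*k \<le> n*k" using i by (intro mult_le_mono1) simp
    then have "i*k + a < m" using a unfolding m_def by (simp add: algebra_simps)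
    then have "\<sigma> ((i-1)*k + a') * \<sigma> (i*k + a) = \<sigma> (i*k + a) * \<sigma> ((i-1)*k + a')"
      using a a' unfolding ik by (intro comm) auto
    then show "\<sigma> (i*k + a) * \<sigma> ((i-1)*k + a') = \<sigma> ((i-1)*k + a') * \<sigma> (i*k + a)" by simp
  qed
  have pc: "Psym emb \<sigma> k (i-1) * Psym emb \<sigma> k i = Psym emb \<sigma> k i * Psym emb \<sigma> k (i-1)"
  proof (rule psym_conj)
    show "\<And>x. emb x * Psym emb \<sigma> k (i-1) = Psym emb \<sigma> k (i-1) * emb x" using cen by blast
    fix a assume "a \<in> {1..<k}"
    then show "Psym emb \<sigma> k (i-1) * \<sigma> (i*k + a) = \<sigma> (i*k + a) * Psym emb \<sigma> k (i-1)"
      using e by simp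
  qed
  define L where "L = prod_list (map (Psym emb \<sigma> k) [0..<i-1])"
  define R where "R = prod_list (map (Psym emb \<sigma> k) [Suc i..<n])"
  define P1 where "P1 = Psym emb \<sigma> k (i-1)"
  define P2 where "P2 = Psym emb \<sigma> k i"
  have ups: "[0..<n] = [0..<i-1] @ (i-1) # i # [Suc i..<n]"
  proof -
    have "[0..<(i-1) + (n - (i-1))] = [0..<i-1] @ [i-1..<(i-1) + (n-(i-1))]"
      by (rule upt_add_eq_append) simp
    then have "[0..<n] = [0..<i-1] @ [i-1..<n]" using i by simp
    also have "[i-1..<n] = (i-1) # [i..<n]" using i by (simp add: upt_conv_Cons i')
    also have "[i..<n] = i # [Suc i..<n]" using i by (simp add: upt_conv_Cons)
    finally show ?thesis .
  qed
  have Peq: "Pkn emb \<sigma> k n = L * (P1 * (P2 * R))"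
    unfolding Pkn_def ups L_def R_def P1_def P2_def by (simp add: mult.assoc)
  have zL: "z * L = L * z" unfolding L_def by (rule prod_conj) (use p3 i in auto)
  have zR: "z * R = R * z" unfolding R_def by (rule prod_conj) (use p3 i in auto)
  have p1': "z * P1 = P2 * z" using p1 P1_def P2_def by simp
  have p2': "z * P2 = P1 * z" using p2 P1_def P2_def by simp
  have pc': "P1 * P2 = P2 * P1" using pc P1_def P2_def by simp
  have "z * (L * (P1 * (P2 * R))) = L * ((z * P1) * (P2 * R))" using zL by (metis mult.assoc)
  also have "\<dots> = L * (P2 * ((z * P2) * R))" unfolding p1' by (simp add: mult.assoc)
  also have "\<dots> = L * (P2 * (P1 * (z * R)))" unfolding p2' by (simp add: mult.assoc)
  also have "\<dots> = L * ((P2 * P1) * R) * z" unfolding zR by (simp add: mult.assoc)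
  also have "\<dots> = (L * (P1 * (P2 * R))) * z" unfolding pc' [symmetric] by (simp add: mult.assoc)
  finally show ?thesis unfolding Peq bs z_def m_def .
qed

lemma Sw_braid:
  fixes emb :: "Cq \<Rightarrow> 'a::ring_1"
  assumes h: "hecke_rep emb (k*n) \<sigma>" and i: "1 \<le> i" "i + 2 \<le> n"
  defines "S \<equiv> \<lambda>j. sigma_w \<sigma> 0 (k*n) (block_swap k j)"
  shows "S i * S (i+1) * S i = S (i+1) * S i * S (i+1)"
proof -
  define m where "m = k*n"
  obtain i' where i': "i = Suc i'" using i by (cases i) auto
  define A where "A = i'*k"
  have "(i+2)*k \<le> n*k" using i by (intro mult_le_mono1) simp
  then have Am: "A + k + 2*k \<le> m" unfolding m_def A_def i' by (simp add: algebra_simps)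
  have bsA: "block_swap k i = bsw A k" using block_swap_bsw[OF i(1)] unfolding A_def i' by simp
  have bsB: "block_swap k (i+1) = bsw (A+k) k" using block_swap_bsw[of "i+1" k] unfolding A_def i' by (simp add: add.commute)
  have hr: "hrel m \<sigma>" using hecke_hrel h m_def by blast
  define wA where "wA = bsw A k"
  define wB where "wB = bsw (A+k) k"
  have pA: "wA permutes {1..m}" unfolding wA_def by (rule bsw_permutes) (use Am in auto)
  have pB: "wB permutes {1..m}" unfolding wB_def by (rule bsw_permutes) (use Am in auto)
  have n1: "ninv m (wB \<circ> wA) = ninv m wB + ninv m wA"
    by (rule ninv_comp[OF pA pB]) (simp add: wA_def wB_def cyc1_eq add_a)
  have n2: "ninv m (wA \<circ> (wB \<circ> wA)) = ninv m wA + ninv m (wB \<circ> wA)"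
    by (rule ninv_comp[OF permutes_compose[OF pA pB] pA]) (simp add: wA_def wB_def cyc1_eq rev3_eq1 add_b)
  have n3: "ninv m (wA \<circ> wB) = ninv m wA + ninv m wB"
    by (rule ninv_comp[OF pB pA]) (simp add: wA_def wB_def cyc2_eq add_c)
  have n4: "ninv m (wB \<circ> (wA \<circ> wB)) = ninv m wB + ninv m (wA \<circ> wB)"
    by (rule ninv_comp[OF permutes_compose[OF pB pA] pB]) (simp add: wA_def wB_def cyc2_eq rev3_eq2 add_d)
  have s1: "sigma_w \<sigma> 0 m (wA \<circ> (wB \<circ> wA)) = sigma_w \<sigma> 0 m wA * (sigma_w \<sigma> 0 m wB * sigma_w \<sigma> 0 m wA)"
    using sigma_w_mult[OF hr permutes_compose[OF pA pB] pA n2] sigma_w_mult[OF hr pA pB n1] by simp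
  have s2: "sigma_w \<sigma> 0 m (wB \<circ> (wA \<circ> wB)) = sigma_w \<sigma> 0 m wB * (sigma_w \<sigma> 0 m wA * sigma_w \<sigma> 0 m wB)"
    using sigma_w_mult[OF hr permutes_compose[OF pB pA] pB n4] sigma_w_mult[OF hr pB pA n3] by simp
  have eq: "wA \<circ> (wB \<circ> wA) = wB \<circ> (wA \<circ> wB)"
    by (simp add: fun_eq_iff wA_def wB_def cyc1_eq cyc2_eq rev3_eq1 rev3_eq2)
  show ?thesis unfolding S_def bsA bsB using s1 s2 eq
    by (simp add: mult.assoc wA_def wB_def m_def)
qed

lemma Sw_comm:
  fixes emb :: "Cq \<Rightarrow> 'a::ring_1"
  assumes h: "hecke_rep emb (k*n) \<sigma>" and i: "1 \<le> i" "i + 1 < j" "j < n"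
  defines "S \<equiv> \<lambda>j. sigma_w \<sigma> 0 (k*n) (block_swap k j)"
  shows "S i * S j = S j * S i"
proof -
  define m where "m = k*n"
  obtain i' where i': "i = Suc i'" using i by (cases i) auto
  obtain j' where j': "j = Suc j'" using i by (cases j) auto
  define A where "A = i'*k"
  define C where "C = j'*k"
  have "(j+1)*k \<le> n*k" using i by (intro mult_le_mono1) simp
  then have Cm: "C + 2*k \<le> m" unfolding m_def C_def j' by (simp add: algebra_simps)
  have "(i+1)*k \<le> j'*k" using i j' by (intro mult_le_mono1) simp
  then have AC: "A + 2*k \<le> C" unfolding A_def C_def i' by (simp add: algebra_simps)
  have bsA: "block_swap k i = bsw A k" using block_swap_bsw[OF i(1)] unfolding A_def i' by simp
  have bsC: "block_swap k j = bsw C k" using block_swap_bsw[of j k] unfolding C_def j' by simp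
  have hr: "hrel m \<sigma>" using hecke_hrel h m_def by blast
  define wA where "wA = bsw A k"
  define wC where "wC = bsw C k"
  have pA: "wA permutes {1..m}" unfolding wA_def by (rule bsw_permutes) (use Cm AC in auto)
  have pC: "wC permutes {1..m}" unfolding wC_def by (rule bsw_permutes) (use Cm in auto)
  have n1: "ninv m (wA \<circ> wC) = ninv m wA + ninv m wC"
    by (rule ninv_comp[OF pC pA]) (use AC in \<open>simp add: wA_def wC_def add_comm\<close>)
  have eq: "wA \<circ> wC = wC \<circ> wA" by (simp add: fun_eq_iff wA_def wC_def bsw_comm_pt[OF AC])
  have n2: "ninv m (wC \<circ> wA) = ninv m wC + ninv m wA" using n1 eq by simp
  have s1: "sigma_w \<sigma> 0 m (wA \<circ> wC) = sigma_w \<sigma> 0 m wA * sigma_w \<sigma> 0 m wC"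
    by (rule sigma_w_mult[OF hr pC pA n1])
  have s2: "sigma_w \<sigma> 0 m (wC \<circ> wA) = sigma_w \<sigma> 0 m wC * sigma_w \<sigma> 0 m wA"
    by (rule sigma_w_mult[OF hr pA pC n2])
  show ?thesis unfolding S_def bsA bsC using s1 s2 eq
    by (simp add: wA_def wC_def m_def)
qed


theorem mainTheorem8:
  fixes emb :: "Cq \<Rightarrow> 'a::ring_1" and \<sigma> :: "nat \<Rightarrow> 'a" and k n :: nat
  assumes "k \<ge> 1" and "n \<ge> 2" and "hecke_rep emb (k * n) \<sigma>"
  defines "P \<equiv> Pkn emb \<sigma> k n"
  defines "Sw \<equiv> \<lambda>i. sigma_w \<sigma> 0 (k * n) (block_swap k i)"
  defines "\<Sigma> \<equiv> \<lambda>i. P * Sw i * P"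
  shows "(\<forall>i\<in>{1..n-1}. Sw i * P = P * Sw i)
    \<and> (\<forall>i\<in>{1..n-2}. \<Sigma> i * \<Sigma> (i+1) * \<Sigma> i = \<Sigma> (i+1) * \<Sigma> i * \<Sigma> (i+1))
    \<and> (\<forall>i\<in>{1..n-1}. \<forall>j\<in>{1..n-1}. (i + 1 < j \<or> j + 1 < i) \<longrightarrow> \<Sigma> i * \<Sigma> j = \<Sigma> j * \<Sigma> i)"
proof -
  have c1: "Sw i * P = P * Sw i" if "i \<in> {1..n-1}" for i
  proof -
    have "1 \<le> i" "i < n" using that assms(2) by auto
    then show ?thesis unfolding Sw_def P_def by (rule Sw_P_comm[OF assms(3) assms(1)])
  qed
  have c2: "\<Sigma> i * \<Sigma> (i+1) * \<Sigma> i = \<Sigma> (i+1) * \<Sigma> i * \<Sigma> (i+1)" if i: "i \<in> {1..n-2}" for i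
  proof -
    have "1 \<le> i" "i + 2 \<le> n" using i assms(2) by auto
    then have b: "Sw i * Sw (i+1) * Sw i = Sw (i+1) * Sw i * Sw (i+1)"
      unfolding Sw_def by (rule Sw_braid[OF assms(3)])
    have "Sw i * P = P * Sw i" "Sw (i+1) * P = P * Sw (i+1)" using c1 i assms(2) by auto
    from fuse_braid[OF this b] show ?thesis unfolding \<Sigma>_def by simp
  qed
  have c3: "\<Sigma> i * \<Sigma> j = \<Sigma> j * \<Sigma> i"
    if i: "i \<in> {1..n-1}" and j: "j \<in> {1..n-1}" and ij: "i + 1 < j \<or> j + 1 < i" for i j
  proof -
    have b: "Sw i * Sw j = Sw j * Sw i"
    proof (cases "i + 1 < j")
      case True
      show ?thesis unfolding Sw_def by (rule Sw_comm[OF assms(3)]) (use i j True in auto)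
    next
      case False
      then have "j + 1 < i" using ij by simp
      have "Sw j * Sw i = Sw i * Sw j" unfolding Sw_def by (rule Sw_comm[OF assms(3)]) (use i j \<open>j + 1 < i\<close> in auto)
      then show ?thesis by simp
    qed
    have "Sw i * P = P * Sw i" "Sw j * P = P * Sw j" using c1 i j by auto
    from fuse_comm[OF this b] show ?thesis unfolding \<Sigma>_def by simp
  qed
  show ?thesis using c1 c2 c3 by blast
qed

end
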